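(* Let $B\subset\mathbf{P}^4$ be a rational normal quartic, $V=\mathrm{Sec}\,B$, $\mathbf{P}^2=\mathrm{Hilb}_2(B)$, $V_z$ the line spanned by the degree-$2$ divisor $b_z$ of $z\in\mathbf{P}^2$, $G(1,4)\subset\mathbf{P}^9$ the Plücker embedded Grassmannian of lines of $\mathbf{P}^4$, and $Z\subset G(1,4)$ the image of $z\mapsto[V_z]$. Let $A\subset Z$ be the sextic curve corresponding to a general conic of $\mathbf{P}^2$, let $R'\subset\mathbf{P}^4$ be the union of the lines parametrized by $A$, and let $Q$ be the quadric through $B$ with $R'=V\cap Q$ (for general $A$, $Q$ is smooth). Let $W\subset G(1,4)$ be the tangential quadratic complex of $Q$, i.e. the variety of lines tangent to $Q$, and let $T=\langle A\rangle\cap G(1,4)$. Then $W$ does not contain $T$. *)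

theory Defs
  imports Complex_Main "HOL-Computational_Algebra.Polynomial"
begin

text \<open>Points of P^n are represented by their affine cones in C^(n+1):
  a vector is a function nat \<Rightarrow> complex whose coordinates with index \<ge> n+1 vanish.
  Binary forms of degree d in (s,t) are represented by univariate polynomials:
  coefficient j is the coefficient of s^(d-j) t^j.\<close>

definition pt5 :: "(nat \<Rightarrow> complex) \<Rightarrow> bool" where
  "pt5 x \<longleftrightarrow> (\<forall>i\<ge>5. x i = 0)"

definition invertible5 :: "(nat \<Rightarrow> nat \<Rightarrow> complex) \<Rightarrow> bool" where
  "invertible5 M \<longleftrightarrow> (\<forall>x. (\<forall>i<5. (\<Sum>j<5. M i j * x j) = 0) \<longrightarrow> (\<forall>j<5. x j = 0))"

text \<open>The rational normal quartic B: image of P^1 under (s:t) \<mapsto> (f_0(s,t):...:f_4(s,t)),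
  f_i = \<Sum>_j M i j s^(4-j) t^j, for a basis (f_i) of binary quartics (M invertible).\<close>
definition rnq_map :: "(nat \<Rightarrow> nat \<Rightarrow> complex) \<Rightarrow> complex \<Rightarrow> complex \<Rightarrow> nat \<Rightarrow> complex" where
  "rnq_map M s t = (\<lambda>i. if i < 5 then (\<Sum>j<5. M i j * s ^ (4 - j) * t ^ j) else 0)"

definition rnq :: "(nat \<Rightarrow> nat \<Rightarrow> complex) \<Rightarrow> (nat \<Rightarrow> complex) set" where
  "rnq M = {rnq_map M s t | s t. True}"

definition lin5 :: "(nat \<Rightarrow> complex) \<Rightarrow> (nat \<Rightarrow> complex) \<Rightarrow> complex" where
  "lin5 h x = (\<Sum>i<5. h i * x i)"

text \<open>Pull-back of the hyperplane h to P^1: the binary quartic h(f_0,...,f_4).\<close>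
definition pullback :: "(nat \<Rightarrow> nat \<Rightarrow> complex) \<Rightarrow> (nat \<Rightarrow> complex) \<Rightarrow> complex poly" where
  "pullback M h = Poly (map (\<lambda>j. \<Sum>i<5. h i * M i j) [0..<5])"

definition form_dvd :: "complex poly \<Rightarrow> complex poly \<Rightarrow> bool" where
  "form_dvd q f \<longleftrightarrow> (\<exists>r. degree r \<le> 2 \<and> f = q * r)"

text \<open>A point z = (a,b,c) \<noteq> 0 of P^2 = Hilb_2(B) is the degree-2 divisor b_z of B cut out by
  the binary quadric a s^2 + b s t + c t^2.  V_z is its linear span: the intersection of all
  hyperplanes containing b_z (those whose pull-back is divisible by the quadric).\<close>
definition Vz :: "(nat \<Rightarrow> nat \<Rightarrow> complex) \<Rightarrow> complex \<times> complex \<times> complex \<Rightarrow> (nat \<Rightarrow> complex) set" where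
  "Vz M z = (case z of (a, b, c) \<Rightarrow>
     {x. pt5 x \<and> (\<forall>h. form_dvd [:a, b, c:] (pullback M h) \<longrightarrow> lin5 h x = 0)})"

definition SecB :: "(nat \<Rightarrow> nat \<Rightarrow> complex) \<Rightarrow> (nat \<Rightarrow> complex) set" where
  "SecB M = (\<Union>z\<in>{z. z \<noteq> (0, 0, 0)}. Vz M z)"

definition plucker :: "(nat \<Rightarrow> complex) \<Rightarrow> (nat \<Rightarrow> complex) \<Rightarrow> nat \<times> nat \<Rightarrow> complex" where
  "plucker u v = (\<lambda>(i, j). if i < j \<and> j < 5 then u i * v j - u j * v i else 0)"

definition Zpt :: "(nat \<Rightarrow> nat \<Rightarrow> complex) \<Rightarrow> complex \<times> complex \<times> complex \<Rightarrow> (nat \<times> nat \<Rightarrow> complex) set" where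
  "Zpt M z = {plucker u v | u v. u \<in> Vz M z \<and> v \<in> Vz M z \<and> (\<exists>p. plucker u v p \<noteq> 0)}"

definition conic :: "(nat \<Rightarrow> complex) \<Rightarrow> (complex \<times> complex \<times> complex) set" where
  "conic k = {(a, b, c). (a, b, c) \<noteq> (0, 0, 0) \<and>
     k 0 * a^2 + k 1 * b^2 + k 2 * c^2 + k 3 * a * b + k 4 * a * c + k 5 * b * c = 0}"

definition Acurve :: "(nat \<Rightarrow> nat \<Rightarrow> complex) \<Rightarrow> (nat \<Rightarrow> complex) \<Rightarrow> (nat \<times> nat \<Rightarrow> complex) set" where
  "Acurve M k = (\<Union>z\<in>conic k. Zpt M z)"

definition Rprime :: "(nat \<Rightarrow> nat \<Rightarrow> complex) \<Rightarrow> (nat \<Rightarrow> complex) \<Rightarrow> (nat \<Rightarrow> complex) set" where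
  "Rprime M k = (\<Union>z\<in>conic k. Vz M z)"

definition lin_span :: "(nat \<times> nat \<Rightarrow> complex) set \<Rightarrow> (nat \<times> nat \<Rightarrow> complex) set" where
  "lin_span S = {w. \<exists>n (c :: nat \<Rightarrow> complex) f. (\<forall>i<n. f i \<in> S) \<and> w = (\<lambda>p. \<Sum>i<n. c i * f i p)}"

definition bil :: "(nat \<Rightarrow> nat \<Rightarrow> complex) \<Rightarrow> (nat \<Rightarrow> complex) \<Rightarrow> (nat \<Rightarrow> complex) \<Rightarrow> complex" where
  "bil S x y = (\<Sum>i<5. \<Sum>j<5. S i j * x i * y j)"

definition quadric :: "(nat \<Rightarrow> nat \<Rightarrow> complex) \<Rightarrow> bool" where
  "quadric S \<longleftrightarrow> (\<forall>i<5. \<forall>j<5. S i j = S j i) \<and> (\<exists>i<5. \<exists>j<5. S i j \<noteq> 0)"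

definition Qset :: "(nat \<Rightarrow> nat \<Rightarrow> complex) \<Rightarrow> (nat \<Rightarrow> complex) set" where
  "Qset S = {x. pt5 x \<and> bil S x x = 0}"

text \<open>The line spanned by independent u, v is tangent to Q (lies in the tangential quadratic
  complex W): the restriction of the quadratic form to the line is degenerate.\<close>
definition tangent_line :: "(nat \<Rightarrow> nat \<Rightarrow> complex) \<Rightarrow> (nat \<Rightarrow> complex) \<Rightarrow> (nat \<Rightarrow> complex) \<Rightarrow> bool" where
  "tangent_line S u v \<longleftrightarrow> bil S u u * bil S v v - (bil S u v)^2 = 0"

text \<open>A property holds for a general conic: it holds outside the zero locus of a nonzero
  polynomial in the six coefficients.\<close>
definition poly6 :: "((nat \<Rightarrow> complex) \<Rightarrow> complex) \<Rightarrow> bool" where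
  "poly6 F \<longleftrightarrow> (\<exists>N (coef :: nat \<Rightarrow> complex) (e :: nat \<Rightarrow> nat \<Rightarrow> nat).
      F = (\<lambda>k. \<Sum>m<N. coef m * (\<Prod>i<6. k i ^ e m i)))"

definition general_conic :: "((nat \<Rightarrow> complex) \<Rightarrow> bool) \<Rightarrow> bool" where
  "general_conic P \<longleftrightarrow> (\<exists>F. poly6 F \<and> (\<exists>k0. F k0 \<noteq> 0) \<and> (\<forall>k. F k \<noteq> 0 \<longrightarrow> P k))"

end

theory Submission
  imports Defs "HOL-Analysis.Analysis"
begin

type_synonym c5 = "complex \<times> complex \<times> complex \<times> complex \<times> complex"
definition to5 :: "(nat \<Rightarrow> complex) \<Rightarrow> c5" where
  "to5 x = (x 0, x 1, x 2, x 3, x 4)"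
definition fr5 :: "c5 \<Rightarrow> nat \<Rightarrow> complex" where
  "fr5 p = (case p of (a,b,c,d,e) \<Rightarrow> (\<lambda>i. if i = 0 then a else if i = 1 then b else if i = 2 then c
      else if i = 3 then d else if i = 4 then e else 0))"
definition Mv :: "(nat \<Rightarrow> nat \<Rightarrow> complex) \<Rightarrow> (nat \<Rightarrow> complex) \<Rightarrow> nat \<Rightarrow> complex" where
  "Mv M y = (\<lambda>i. if i < 5 then (\<Sum>j<5. M i j * y j) else 0)"

lemma sum5: "(\<Sum>j<5. f j) = f 0 + f 1 + f 2 + f 3 + f 4"
  for f :: "nat \<Rightarrow> 'a::comm_monoid_add"
  by (simp add: eval_nat_numeral add.assoc)

lemma fr5_less: "i < 5 \<Longrightarrow> fr5 (to5 x) i = x i"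
  by (auto simp: fr5_def to5_def eval_nat_numeral less_Suc_eq)

lemma surjM:
  assumes "invertible5 M"
  shows "\<exists>x. \<forall>i<5. Mv M x i = y i"
proof -
  define f where "f = (\<lambda>p. to5 (Mv M (fr5 p)))"
  have lin: "linear f"
  proof (rule linearI)
    fix b1 b2 show "f (b1 + b2) = f b1 + f b2"
      by (cases b1; cases b2) (simp add: f_def to5_def Mv_def fr5_def sum5 algebra_simps)
  next
    fix r :: real and b show "f (r *\<^sub>R b) = r *\<^sub>R f b"
      by (cases b) (simp add: f_def to5_def Mv_def fr5_def sum5 algebra_simps scaleR_conv_of_real)
  qed
  have "inj f"
  proof (rule injI)
    fix p q assume "f p = f q"
    hence eq: "\<forall>i<5. (\<Sum>j<5. M i j * (fr5 p j - fr5 q j)) = 0"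
      apply (cases p; cases q)
      apply (simp add: f_def to5_def Mv_def fr5_def sum5 algebra_simps)
      apply (auto simp: eval_nat_numeral less_Suc_eq algebra_simps)
      done
    have "\<forall>j<5. fr5 p j - fr5 q j = 0"
      using assms eq unfolding invertible5_def
      by (erule_tac x="\<lambda>j. fr5 p j - fr5 q j" in allE) simp
    hence h: "\<And>j. j < 5 \<Longrightarrow> fr5 p j = fr5 q j" by simp
    show "p = q"
      using h[of 0] h[of 1] h[of 2] h[of 3] h[of 4] by (cases p; cases q) (simp add: fr5_def)
  qed
  from linear_injective_imp_surjective[OF lin this] obtain p where "f p = to5 y"
    by (metis surjD)
  hence "\<forall>i<5. Mv M (fr5 p) i = y i"
    by (auto simp: f_def to5_def eval_nat_numeral less_Suc_eq)
  thus ?thesis by blast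
qed

definition nu :: "complex \<Rightarrow> complex \<Rightarrow> nat \<Rightarrow> complex" where
  "nu s t = (\<lambda>j. if j < 5 then s ^ (4 - j) * t ^ j else 0)"
definition Vs :: "complex \<Rightarrow> complex \<Rightarrow> complex \<Rightarrow> (nat \<Rightarrow> complex) \<Rightarrow> bool" where
  "Vs a b c y \<longleftrightarrow> pt5 y \<and> a * y 0 + b * y 1 + c * y 2 = 0 \<and> a * y 1 + b * y 2 + c * y 3 = 0
     \<and> a * y 2 + b * y 3 + c * y 4 = 0"
definition Sp :: "(nat \<Rightarrow> nat \<Rightarrow> complex) \<Rightarrow> (nat \<Rightarrow> nat \<Rightarrow> complex) \<Rightarrow> nat \<Rightarrow> nat \<Rightarrow> complex" where
  "Sp M S i j = (\<Sum>a<5. \<Sum>b<5. M a i * S a b * M b j)"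
definition ev :: "nat \<Rightarrow> nat \<Rightarrow> complex" where
  "ev i = (\<lambda>j. if j = i then 1 else 0)"


definition Sk :: "(nat \<Rightarrow> complex) \<Rightarrow> nat \<Rightarrow> nat \<Rightarrow> complex" where
  "Sk k i j = (if i < 5 \<and> j < 5 then
     [[0, 0, k 2, - k 5, k 1],
      [0, -2 * k 2, k 5, k 4, - k 3],
      [k 2, k 5, -2 * k 4 - 2 * k 1, k 3, k 0],
      [- k 5, k 4, k 3, -2 * k 0, 0],
      [k 1, - k 3, k 0, 0, 0]] ! i ! j else 0)"

lemma Bcoeffs:
  assumes "\<forall>t. bil T (nu 1 t) (nu 1 t) = 0"
  shows "T 0 0 = 0 \<and> T 0 1 + T 1 0 = 0 \<and> T 0 2 + T 1 1 + T 2 0 = 0 \<and>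
    T 0 3 + T 1 2 + T 2 1 + T 3 0 = 0 \<and> T 0 4 + T 1 3 + T 2 2 + T 3 1 + T 4 0 = 0 \<and>
    T 1 4 + T 2 3 + T 3 2 + T 4 1 = 0 \<and> T 2 4 + T 3 3 + T 4 2 = 0 \<and> T 3 4 + T 4 3 = 0 \<and> T 4 4 = 0"
proof -
  define L where "L = [T 0 0, T 0 1 + T 1 0, T 0 2 + T 1 1 + T 2 0,
    T 0 3 + T 1 2 + T 2 1 + T 3 0, T 0 4 + T 1 3 + T 2 2 + T 3 1 + T 4 0,
    T 1 4 + T 2 3 + T 3 2 + T 4 1, T 2 4 + T 3 3 + T 4 2, T 3 4 + T 4 3, T 4 4]"
  have "poly (Poly L) t = bil T (nu 1 t) (nu 1 t)" for t
    by (simp add: L_def bil_def sum5 nu_def eval_nat_numeral) algebra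
  hence "\<forall>t. poly (Poly L) t = 0" using assms by simp
  hence p0: "Poly L = 0" using poly_all_0_iff_0 by blast
  have "nth_default 0 L n = 0" for n
    using arg_cong[OF p0, of "\<lambda>p. coeff p n"] by (simp only: coeff_Poly_eq coeff_0)
  from this[of 0] this[of 1] this[of 2] this[of 3] this[of 4] this[of 5] this[of 6] this[of 7] this[of 8]
  show ?thesis by (simp add: nth_default_def L_def)
qed

lemma two_roots:
  fixes A B r1 r2 :: complex
  assumes "r1 \<noteq> r2" "A * r1 + B = 0" "A * r2 + B = 0"
  shows "A = 0 \<and> B = 0"
proof -
  have "A * (r1 - r2) = (A * r1 + B) - (A * r2 + B)" by (simp add: algebra_simps)
  hence "A * (r1 - r2) = 0" using assms by simp
  hence "A = 0" using assms(1) by simp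
  thus ?thesis using assms by simp
qed

lemma bil_ev0: "bil T (ev 0) y = T 0 0 * y 0 + T 0 1 * y 1 + T 0 2 * y 2 + T 0 3 * y 3 + T 0 4 * y 4"
  by (simp add: bil_def sum5 ev_def)
lemma bil_ev4: "bil T (ev 4) y = T 4 0 * y 0 + T 4 1 * y 1 + T 4 2 * y 2 + T 4 3 * y 3 + T 4 4 * y 4"
  by (simp add: bil_def sum5 ev_def)

lemma core:
  fixes T :: "nat \<Rightarrow> nat \<Rightarrow> complex" and k :: "nat \<Rightarrow> complex"
  assumes sym: "\<forall>i<5. \<forall>j<5. T i j = T j i"
    and B: "\<forall>t. bil T (nu 1 t) (nu 1 t) = 0"
    and k1: "k 1 \<noteq> 0"
    and r12: "r1 \<noteq> r2" "r1 \<noteq> 0" "r2 \<noteq> 0"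
    and r1: "k 1 * r1^2 - k 5 * r1 + k 2 = 0" "bil T (ev 0) (nu 1 r1) = 0"
    and r2: "k 1 * r2^2 - k 5 * r2 + k 2 = 0" "bil T (ev 0) (nu 1 r2) = 0"
    and p12: "p1 \<noteq> p2" "p1 \<noteq> 0" "p2 \<noteq> 0"
    and p1: "k 1 * p1^2 - k 3 * p1 + k 0 = 0" "bil T (ev 4) (nu p1 1) = 0"
    and p2: "k 1 * p2^2 - k 3 * p2 + k 0 = 0" "bil T (ev 4) (nu p2 1) = 0"
    and w: "w \<noteq> 0" "w \<noteq> 1"
      "k 0 * w^2 + k 1 * (-(1+w))^2 + k 2 + k 3 * w * (-(1+w)) + k 4 * w + k 5 * (-(1+w)) = 0"
      "bil T (nu 1 1) (nu 1 w) = 0"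
  shows "\<forall>i<5. \<forall>j<5. T i j = (T 0 4 / k 1) * Sk k i j"
proof -
  define L where "L = T 0 4 / k 1"
  have L: "T 0 4 = L * k 1" using k1 by (simp add: L_def)
  have s: "T 1 0 = T 0 1" "T 2 0 = T 0 2" "T 3 0 = T 0 3" "T 4 0 = T 0 4" "T 2 1 = T 1 2"
    "T 3 1 = T 1 3" "T 4 1 = T 1 4" "T 3 2 = T 2 3" "T 4 2 = T 2 4" "T 4 3 = T 3 4"
    using sym by auto
  from Bcoeffs[OF B] have bc: "T 0 0 = 0 \<and> T 0 1 + T 1 0 = 0 \<and> T 0 2 + T 1 1 + T 2 0 = 0 \<and>
    T 0 3 + T 1 2 + T 2 1 + T 3 0 = 0 \<and> T 0 4 + T 1 3 + T 2 2 + T 3 1 + T 4 0 = 0 \<and>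
    T 1 4 + T 2 3 + T 3 2 + T 4 1 = 0 \<and> T 2 4 + T 3 3 + T 4 2 = 0 \<and> T 3 4 + T 4 3 = 0 \<and> T 4 4 = 0" .
  have b0: "T 0 0 = 0" "T 0 1 = 0" "T 1 1 = - 2 * T 0 2" "T 1 2 = - T 0 3"
    "T 2 2 = - 2 * T 0 4 - 2 * T 1 3" "T 2 3 = - T 1 4" "T 3 3 = - 2 * T 2 4" "T 3 4 = 0" "T 4 4 = 0"
    using bc s by algebra+
  have e0: "(T 0 3 + L * k 5) * r + (T 0 2 - L * k 2) = 0"
    if "k 1 * r^2 - k 5 * r + k 2 = 0" "bil T (ev 0) (nu 1 r) = 0" "r \<noteq> 0" for r
  proof -
    have "r^2 * (T 0 2 + T 0 3 * r + T 0 4 * r^2) = 0"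
      using that(2) b0 by (simp add: bil_ev0 nu_def eval_nat_numeral algebra_simps)
    hence "T 0 2 + T 0 3 * r + T 0 4 * r^2 = 0" using that(3) by simp
    thus ?thesis using that(1) L by algebra
  qed
  from two_roots[OF r12(1) e0[OF r1 r12(2)] e0[OF r2 r12(3)]]
  have c1: "T 0 3 = - L * k 5" "T 0 2 = L * k 2" by algebra+
  have e4: "(T 1 4 + L * k 3) * p + (T 2 4 - L * k 0) = 0"
    if "k 1 * p^2 - k 3 * p + k 0 = 0" "bil T (ev 4) (nu p 1) = 0" "p \<noteq> 0" for p
  proof -
    have "T 4 0 * p^4 + T 4 1 * p^3 + T 4 2 * p^2 + T 4 3 * p + T 4 4 = 0"
      using that(2) by (simp add: bil_ev4 nu_def)
    hence "p^2 * (T 0 4 * p^2 + T 1 4 * p + T 2 4) = 0"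
      using b0 s by algebra
    hence "T 0 4 * p^2 + T 1 4 * p + T 2 4 = 0" using that(3) by simp
    thus ?thesis using that(1) L by algebra
  qed
  from two_roots[OF p12(1) e4[OF p1 p12(2)] e4[OF p2 p12(3)]]
  have c2: "T 1 4 = - L * k 3" "T 2 4 = L * k 0" by algebra+
  have "(T 1 3 - L * k 4) * (w * (w - 1)^2) = 0"
  proof -
    have h: "(\<Sum>i<5. \<Sum>j<5. T i j * w ^ j) = 0"
      using w(4) by (simp add: bil_def nu_def)
    show ?thesis using h w(3) b0 s c1 c2 L
      by (simp add: sum5 eval_nat_numeral) algebra
  qed
  hence c3: "T 1 3 = L * k 4" using w(1,2) by simp
  have t22: "T 2 2 = L * (-2 * k 4 - 2 * k 1)" using b0 c3 L by algebra
  show ?thesis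
  proof (intro allI impI)
    fix i j :: nat assume "i < 5" "j < 5"
    hence "i \<in> {0,1,2,3,4}" "j \<in> {0,1,2,3,4}" by auto
    thus "T i j = (T 0 4 / k 1) * Sk k i j"
      unfolding L_def[symmetric] using b0 s c1 c2 c3 L t22
      by (auto simp: Sk_def algebra_simps)
  qed
qed

definition Pk :: "(nat \<Rightarrow> complex) \<Rightarrow> nat \<Rightarrow> complex" where
  "Pk k = (let y1 = k 1 * k 3 - k 0 * k 5; y2 = k 1 ^ 2 - k 0 * k 2; y3 = k 1 * k 5 - k 2 * k 3 in
     (\<lambda>j. if j < 5 then [k 3 * y1 - k 0 * y2, k 1 * y1, k 1 * y2, k 1 * y3, k 5 * y3 - k 2 * y2] ! j else 0))"

definition Gk :: "(nat \<Rightarrow> complex) \<Rightarrow> complex" where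
  "Gk k = 2 * k 1 ^ 2 * k 2 * k 3 ^ 3 * k 5 - 2 * k 1 ^ 3 * k 3 ^ 2 * k 5 ^ 2 - 2 * k 1 ^ 3 * k 2 * k 3 ^ 2 * k 4 + 2 * k 1 ^ 4 * k 3 * k 4 * k 5 - 2 * k 1 ^ 4 * k 2 * k 3 ^ 2 + 4 * k 1 ^ 5 * k 3 * k 5 - 2 * k 1 ^ 6 * k 4 - 2 * k 1 ^ 7 - 2 * k 0 * k 1 * k 2 * k 3 ^ 2 * k 5 ^ 2 + 2 * k 0 * k 1 ^ 2 * k 3 * k 5 ^ 3 + 2 * k 0 * k 1 ^ 2 * k 2 * k 3 * k 4 * k 5 - 2 * k 0 * k 1 ^ 2 * k 2 ^ 2 * k 3 ^ 2 - 2 * k 0 * k 1 ^ 3 * k 4 * k 5 ^ 2 - 2 * k 0 * k 1 ^ 4 * k 5 ^ 2 + 4 * k 0 * k 1 ^ 4 * k 2 * k 4 + 2 * k 0 * k 1 ^ 5 * k 2 + 4 * k 0 ^ 2 * k 1 * k 2 ^ 2 * k 3 * k 5 - 2 * k 0 ^ 2 * k 1 ^ 2 * k 2 * k 5 ^ 2 - 2 * k 0 ^ 2 * k 1 ^ 2 * k 2 ^ 2 * k 4 + 2 * k 0 ^ 2 * k 1 ^ 3 * k 2 ^ 2 - 2 * k 0 ^ 3 * k 1 * k 2 ^ 3"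

definition Vv :: "nat \<Rightarrow> complex" where
  "Vv = (\<lambda>j. ev 0 j + ev 4 j)"

lemma bil_Sk_PP: "bil (Sk k) (Pk k) (Pk k) = Gk k"
  by (simp add: bil_def sum5 Sk_def Pk_def Gk_def Let_def) algebra

lemma bil_Sk_PV: "bil (Sk k) (Pk k) Vv = 0"
  by (simp add: bil_def sum5 Sk_def Pk_def Vv_def ev_def Let_def) algebra

lemma bil_Sk_VV: "bil (Sk k) Vv Vv = 2 * k 1"
  by (simp add: bil_def sum5 Sk_def Vv_def ev_def)

lemma quad_root:
  fixes A B C :: complex
  assumes "A \<noteq> 0"
  shows "\<exists>x. A * x^2 + B * x + C = 0"
proof -
  define s where "s = csqrt (B^2 - 4 * A * C)"
  have s2: "s^2 = B^2 - 4 * A * C" by (simp add: s_def)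
  have "A * ((- B + s) / (2 * A))^2 + B * ((- B + s) / (2 * A)) + C = 0"
    using assms s2 by (simp add: field_simps power2_eq_square) algebra
  thus ?thesis by blast
qed

lemma quad_two_roots:
  fixes A B C :: complex
  assumes "A \<noteq> 0" "B^2 - 4 * A * C \<noteq> 0"
  shows "\<exists>x y. x \<noteq> y \<and> A * x^2 + B * x + C = 0 \<and> A * y^2 + B * y + C = 0"
proof -
  define s where "s = csqrt (B^2 - 4 * A * C)"
  have s2: "s^2 = B^2 - 4 * A * C" by (simp add: s_def)
  have s0: "s \<noteq> 0" using assms(2) s2 by auto
  have "A * ((- B + s) / (2 * A))^2 + B * ((- B + s) / (2 * A)) + C = 0"
    using assms s2 by (simp add: field_simps power2_eq_square) algebra
  moreover have "A * ((- B - s) / (2 * A))^2 + B * ((- B - s) / (2 * A)) + C = 0"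
    using assms s2 by (simp add: field_simps power2_eq_square) algebra
  moreover have "(- B + s) / (2 * A) \<noteq> (- B - s) / (2 * A)"
    using assms s0 by (simp add: field_simps)
  ultimately show ?thesis by blast
qed

lemma poly6_const: "poly6 (\<lambda>k. c)"
  unfolding poly6_def
  by (rule exI[of _ 1], rule exI[of _ "\<lambda>_. c"], rule exI[of _ "\<lambda>_ _. 0"]) simp

lemma pr6: "i < 6 \<Longrightarrow> (\<Prod>j<6. (k::nat\<Rightarrow>complex) j ^ (if j = i then 1 else 0)) = k i"
proof -
  assume i: "i < 6"
  have "(\<Prod>j<6. k j ^ (if j = i then 1 else 0)) = (\<Prod>j<6. if j = i then k j else 1)"
    by (rule prod.cong) auto
  also have "\<dots> = k i" using i by (simp add: prod.delta)
  finally show ?thesis .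
qed
lemma poly6_var: "i < 6 \<Longrightarrow> poly6 (\<lambda>k. k i)"
  unfolding poly6_def
  apply (rule exI[of _ 1], rule exI[of _ "\<lambda>_. 1"], rule exI[of _ "\<lambda>_ j. if j = i then 1 else 0"])
  apply (rule ext)
  apply (simp only: pr6 lessThan_Suc lessThan_0 sum.empty sum.insert finite.emptyI empty_iff not_False_eq_True)
  apply simp
  done

lemma poly6_add:
  assumes "poly6 f" "poly6 g"
  shows "poly6 (\<lambda>k. f k + g k)"
proof -
  from assms obtain N1 N2 :: nat and c1 c2 :: "nat \<Rightarrow> complex" and e1 e2 :: "nat \<Rightarrow> nat \<Rightarrow> nat" where
    f: "f = (\<lambda>k. \<Sum>m<N1. c1 m * (\<Prod>i<6. k i ^ e1 m i))" and
    g: "g = (\<lambda>k. \<Sum>m<N2. c2 m * (\<Prod>i<6. k i ^ e2 m i))"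
    unfolding poly6_def by blast
  define c where "c = (\<lambda>m. if m < N1 then c1 m else c2 (m - N1))"
  define e where "e = (\<lambda>m. if m < N1 then e1 m else e2 (m - N1))"
  have "(\<Sum>m<N1 + N2. c m * (\<Prod>i<6. k i ^ e m i)) = f k + g k" for k
  proof -
    have "(\<Sum>m<N1 + N2. c m * (\<Prod>i<6. k i ^ e m i)) =
      (\<Sum>m\<in>{0..<N1}. c m * (\<Prod>i<6. k i ^ e m i)) + (\<Sum>m\<in>{N1..<N1+N2}. c m * (\<Prod>i<6. k i ^ e m i))"
      by (simp add: atLeast0LessThan[symmetric] sum.atLeastLessThan_concat)
    also have "(\<Sum>m\<in>{0..<N1}. c m * (\<Prod>i<6. k i ^ e m i)) = f k"
      by (simp add: f c_def e_def atLeast0LessThan)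
    also have "(\<Sum>m\<in>{N1..<N1+N2}. c m * (\<Prod>i<6. k i ^ e m i)) = g k"
      using sum.shift_bounds_nat_ivl[of "\<lambda>m. c m * (\<Prod>i<6. k i ^ e m i)" 0 N1 N2]
      by (simp add: g c_def e_def atLeast0LessThan add.commute)
    finally show ?thesis .
  qed
  thus ?thesis unfolding poly6_def by (intro exI[of _ "N1+N2"] exI[of _ c] exI[of _ e]) (simp add: fun_eq_iff)
qed

lemma poly6_mono:
  assumes "poly6 g"
  shows "poly6 (\<lambda>k. c * (\<Prod>i<6. k i ^ e0 i) * g k)"
proof -
  from assms obtain N :: nat and c2 :: "nat \<Rightarrow> complex" and e2 :: "nat \<Rightarrow> nat \<Rightarrow> nat" where
    g: "g = (\<lambda>k. \<Sum>m<N. c2 m * (\<Prod>i<6. k i ^ e2 m i))"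
    unfolding poly6_def by blast
  have "c * (\<Prod>i<6. k i ^ e0 i) * g k = (\<Sum>m<N. (c * c2 m) * (\<Prod>i<6. k i ^ (e2 m i + e0 i)))" for k
    by (simp add: g sum_distrib_left power_add prod.distrib mult_ac)
  thus ?thesis unfolding poly6_def by (intro exI[of _ N] exI[of _ "\<lambda>m. c * c2 m"] exI[of _ "\<lambda>m i. e2 m i + e0 i"]) (simp add: fun_eq_iff)
qed

lemma poly6_sum:
  fixes N :: nat and f :: "nat \<Rightarrow> (nat \<Rightarrow> complex) \<Rightarrow> complex"
  shows "(\<And>m. m < N \<Longrightarrow> poly6 (f m)) \<Longrightarrow> poly6 (\<lambda>k. \<Sum>m<N. f m k)"
proof (induction N)
  case 0 thus ?case using poly6_const[of 0] by simp
next
  case (Suc N)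
  have "poly6 (\<lambda>k. (\<Sum>m<N. f m k) + f N k)"
    using Suc by (intro poly6_add) auto
  thus ?case by simp
qed

lemma poly6_mult:
  assumes "poly6 f" "poly6 g"
  shows "poly6 (\<lambda>k. f k * g k)"
proof -
  from assms(1) obtain N :: nat and c1 :: "nat \<Rightarrow> complex" and e1 :: "nat \<Rightarrow> nat \<Rightarrow> nat" where
    f: "f = (\<lambda>k. \<Sum>m<N. c1 m * (\<Prod>i<6. k i ^ e1 m i))"
    unfolding poly6_def by blast
  have eq: "(\<lambda>k. f k * g k) = (\<lambda>k. \<Sum>m<N. c1 m * (\<Prod>i<6. k i ^ e1 m i) * g k)"
    by (simp add: f sum_distrib_right)
  have "poly6 (\<lambda>k. \<Sum>m<N. c1 m * (\<Prod>i<6. k i ^ e1 m i) * g k)"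
    by (intro poly6_sum poly6_mono assms(2))
  thus ?thesis by (simp only: eq)
qed

lemma poly6_uminus: "poly6 f \<Longrightarrow> poly6 (\<lambda>k. - f k)"
  using poly6_mult[OF poly6_const[of "-1"]] by simp

lemma poly6_diff: "poly6 f \<Longrightarrow> poly6 g \<Longrightarrow> poly6 (\<lambda>k. f k - g k)"
  using poly6_add[of f "\<lambda>k. - g k"] poly6_uminus[of g] by simp

lemma poly6_pow: "poly6 f \<Longrightarrow> poly6 (\<lambda>k. f k ^ n)"
proof (induction n)
  case 0 thus ?case using poly6_const[of 1] by simp
next
  case (Suc n) thus ?case using poly6_mult[of f "\<lambda>k. f k ^ n"] by simp
qed

definition Fk :: "(nat \<Rightarrow> complex) \<Rightarrow> complex" where
  "Fk k = k 0 * k 1 * k 2 * (k 5 ^ 2 - 4 * k 1 * k 2) * (k 3 ^ 2 - 4 * k 0 * k 1) * (k 0 + k 1 - k 3)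
     * (k 1 + k 2 - k 5) * (k 0 + 4 * k 1 + k 2 - 2 * k 3 + k 4 - 2 * k 5) * Gk k"

lemma poly6_Fk: "poly6 Fk"
proof -
  have "poly6 (\<lambda>k. Fk k)"
    unfolding Fk_def Gk_def
    by (intro poly6_mult poly6_add poly6_diff poly6_uminus poly6_pow poly6_var poly6_const; simp)
  thus ?thesis by simp
qed

lemma Fk_nz: "Fk (\<lambda>i. [1, 2, 3, 4, 5, 6] ! i) \<noteq> 0"
  by (simp add: Fk_def Gk_def)

lemma deg2_poly:
  fixes r :: "complex poly"
  assumes "degree r \<le> 2"
  shows "r = [:coeff r 0, coeff r 1, coeff r 2:]"
proof (rule poly_eqI)
  fix n show "coeff r n = coeff [:coeff r 0, coeff r 1, coeff r 2:] n"
  proof (cases "n \<le> 2")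
    case True thus ?thesis by (auto simp: le_Suc_eq numeral_2_eq_2 coeff_pCons split: nat.splits)
  next
    case False
    hence "coeff r n = 0" using assms by (intro coeff_eq_0) auto
    moreover have "coeff [:coeff r 0, coeff r 1, coeff r 2:] n = 0"
      using False by (cases n; cases "n - 1"; cases "n - 2") (auto simp: coeff_pCons numeral_2_eq_2 split: nat.splits)
    ultimately show ?thesis by simp
  qed
qed

lemma polymul3:
  "[:a, b, c:] * [:r0, r1, r2:] = [:a*r0, a*r1 + b*r0, a*r2 + b*r1 + c*r0, b*r2 + c*r1, (c::complex)*r2:]"
  by (simp add: algebra_simps)

lemma Mv_Vz:
  assumes "Vs a b c y"
  shows "Mv M y \<in> Vz M (a, b, c)"
proof -
  have pt: "pt5 (Mv M y)" by (simp add: pt5_def Mv_def)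
  have "lin5 h (Mv M y) = 0" if "form_dvd [:a, b, c:] (pullback M h)" for h
  proof -
    from that obtain r where r: "degree r \<le> 2" "pullback M h = [:a, b, c:] * r"
      unfolding form_dvd_def by blast
    define r0 where "r0 = coeff r 0"
    define r1 where "r1 = coeff r 1"
    define r2 where "r2 = coeff r 2"
    have pr: "pullback M h = [:a*r0, a*r1 + b*r0, a*r2 + b*r1 + c*r0, b*r2 + c*r1, c*r2:]"
      using r(2) deg2_poly[OF r(1)] polymul3 unfolding r0_def r1_def r2_def by metis
    have cp: "coeff (pullback M h) j = (\<Sum>i<5. h i * M i j)" if "j < 5" for j
      using that by (simp add: pullback_def nth_default_def)
    have "lin5 h (Mv M y) = (\<Sum>i<5. \<Sum>j<5. h i * M i j * y j)"
      unfolding lin5_def Mv_def by (simp add: sum_distrib_left mult.assoc)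
    also have "\<dots> = (\<Sum>j<5. \<Sum>i<5. h i * M i j * y j)"
      by (rule sum.swap)
    also have "\<dots> = (\<Sum>j<5. coeff (pullback M h) j * y j)"
      by (rule sum.cong[OF refl]) (simp add: cp sum_distrib_right)
    also have "\<dots> = r0 * (a * y 0 + b * y 1 + c * y 2) + r1 * (a * y 1 + b * y 2 + c * y 3)
        + r2 * (a * y 2 + b * y 3 + c * y 4)"
      unfolding pr sum5 by (simp add: eval_nat_numeral) algebra
    also have "\<dots> = 0" using assms by (simp add: Vs_def)
    finally show ?thesis .
  qed
  thus ?thesis using pt by (simp add: Vz_def)
qed

lemma bil_Mv: "bil S (Mv M x) (Mv M y) = bil (Sp M S) x y"
proof -
  have "bil S (Mv M x) (Mv M y) = (\<Sum>a<5. \<Sum>b<5. \<Sum>i<5. \<Sum>j<5. M a i * S a b * M b j * x i * y j)"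
    by (simp add: bil_def Mv_def sum_distrib_left sum_distrib_right mult_ac)
  also have "\<dots> = (\<Sum>a<5. \<Sum>i<5. \<Sum>b<5. \<Sum>j<5. M a i * S a b * M b j * x i * y j)"
    by (rule sum.cong[OF refl], rule sum.swap)
  also have "\<dots> = (\<Sum>i<5. \<Sum>a<5. \<Sum>b<5. \<Sum>j<5. M a i * S a b * M b j * x i * y j)"
    by (rule sum.swap)
  also have "\<dots> = (\<Sum>i<5. \<Sum>a<5. \<Sum>j<5. \<Sum>b<5. M a i * S a b * M b j * x i * y j)"
    by (rule sum.cong[OF refl], rule sum.cong[OF refl], rule sum.swap)
  also have "\<dots> = (\<Sum>i<5. \<Sum>j<5. \<Sum>a<5. \<Sum>b<5. M a i * S a b * M b j * x i * y j)"
    by (rule sum.cong[OF refl], rule sum.swap)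
  also have "\<dots> = bil (Sp M S) x y"
    by (simp add: bil_def Sp_def sum_distrib_left sum_distrib_right mult_ac)
  finally show ?thesis .
qed

lemma rnq_Mv: "rnq_map M s t = Mv M (nu s t)"
  by (rule ext) (simp add: rnq_map_def Mv_def nu_def mult.assoc)

lemma Sp_sym:
  assumes "\<forall>i<5. \<forall>j<5. S i j = S j i"
  shows "Sp M S i j = Sp M S j i"
proof -
  have "Sp M S i j = (\<Sum>b<5. \<Sum>a<5. M a i * S a b * M b j)"
    unfolding Sp_def by (rule sum.swap)
  also have "\<dots> = Sp M S j i"
    unfolding Sp_def using assms by (intro sum.cong refl) (simp add: mult_ac)
  finally show ?thesis .
qed

lemma bil_add1: "bil S (\<lambda>i. x i + y i) z = bil S x z + bil S y z"
  by (simp add: bil_def algebra_simps sum.distrib)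
lemma bil_add2: "bil S z (\<lambda>i. x i + y i) = bil S z x + bil S z y"
  by (simp add: bil_def algebra_simps sum.distrib)
lemma bil_sym:
  assumes "\<forall>i<5. \<forall>j<5. S i j = S j i"
  shows "bil S x y = bil S y x"
proof -
  have "bil S x y = (\<Sum>j<5. \<Sum>i<5. S i j * x i * y j)" unfolding bil_def by (rule sum.swap)
  also have "\<dots> = bil S y x" unfolding bil_def using assms by (intro sum.cong refl) (simp add: mult_ac)
  finally show ?thesis .
qed

lemma lin3: "a*(x0+y0) + b*(x1+y1) + c*(x2+y2) = (a*x0+b*x1+c*x2) + (a*y0+b*y1+(c*y2::complex))"
  by (simp add: algebra_simps)

lemma polar:
  assumes sym: "\<forall>i<5. \<forall>j<5. S i j = S j i"
    and h: "\<And>y. Vs a b c y \<Longrightarrow> bil S y y = 0"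
    and y1: "Vs a b c y1" and y2: "Vs a b c y2"
  shows "bil S y1 y2 = 0"
proof -
  have "Vs a b c (\<lambda>i. y1 i + y2 i)" using y1 y2 unfolding Vs_def pt5_def by (simp only: lin3) simp
  hence "bil S (\<lambda>i. y1 i + y2 i) (\<lambda>i. y1 i + y2 i) = 0" by (rule h)
  hence "bil S y1 y1 + bil S y1 y2 + (bil S y2 y1 + bil S y2 y2) = 0"
    by (simp add: bil_add1 bil_add2)
  thus ?thesis using h[OF y1] h[OF y2] bil_sym[OF sym, of y2 y1] by simp
qed

lemma plucker_zero_tan:
  assumes "\<forall>p. plucker u v p = 0"
  shows "bil S u u * bil S v v - (bil S u v)^2 = 0"
proof (cases "\<forall>i<5. u i = 0")
  case True
  hence "bil S u u = 0" "bil S u v = 0" by (simp_all add: bil_def)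
  thus ?thesis by simp
next
  case False
  then obtain i where i: "i < 5" "u i \<noteq> 0" by auto
  define c where "c = v i / u i"
  have vj: "v j = c * u j" if j: "j < 5" for j
  proof -
    consider "j < i" | "j = i" | "i < j" by linarith
    thus ?thesis
    proof cases
      case 1
      have "plucker u v (j, i) = 0" using assms by simp
      hence "u j * v i - u i * v j = 0" using 1 i by (simp add: plucker_def)
      thus ?thesis using i by (simp add: c_def field_simps)
    next
      case 2 thus ?thesis using i by (simp add: c_def)
    next
      case 3
      have "plucker u v (i, j) = 0" using assms by simp
      hence "u i * v j - u j * v i = 0" using 3 j by (simp add: plucker_def)
      thus ?thesis using i by (simp add: c_def field_simps)
    qed
  qed
  have "bil S u v = c * bil S u u"
    unfolding bil_def sum_distrib_left by (intro sum.cong refl) (simp add: vj mult_ac)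
  moreover have "bil S v v = c^2 * bil S u u"
    unfolding bil_def sum_distrib_left by (intro sum.cong refl) (simp add: vj mult_ac power2_eq_square)
  ultimately show ?thesis by (simp add: power2_eq_square)
qed

lemma LS0: "(\<lambda>_. 0) \<in> lin_span X"
  unfolding lin_span_def by (rule CollectI, rule exI[of _ 0]) simp

lemma LS1: "f \<in> X \<Longrightarrow> (\<lambda>p. c * f p) \<in> lin_span X"
  unfolding lin_span_def
  by (rule CollectI, rule exI[of _ 1], rule exI[of _ "\<lambda>_. c"], rule exI[of _ "\<lambda>_. f"]) simp

lemma LSadd:
  assumes "w1 \<in> lin_span X" "w2 \<in> lin_span X"
  shows "(\<lambda>p. w1 p + w2 p) \<in> lin_span X"
proof -
  from assms obtain n1 n2 :: nat and c1 c2 :: "nat \<Rightarrow> complex" and f1 f2 where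
    1: "\<forall>i<n1. f1 i \<in> X" "w1 = (\<lambda>p. \<Sum>i<n1. c1 i * f1 i p)" and
    2: "\<forall>i<n2. f2 i \<in> X" "w2 = (\<lambda>p. \<Sum>i<n2. c2 i * f2 i p)"
    unfolding lin_span_def by blast
  define c where "c = (\<lambda>m. if m < n1 then c1 m else c2 (m - n1))"
  define f where "f = (\<lambda>m. if m < n1 then f1 m else f2 (m - n1))"
  have fX: "\<forall>i<n1+n2. f i \<in> X" using 1 2 by (auto simp: f_def)
  have "(\<Sum>i<n1 + n2. c i * f i p) = w1 p + w2 p" for p
  proof -
    have "(\<Sum>i<n1 + n2. c i * f i p) =
      (\<Sum>i\<in>{0..<n1}. c i * f i p) + (\<Sum>i\<in>{n1..<n1+n2}. c i * f i p)"
      by (simp add: atLeast0LessThan[symmetric] sum.atLeastLessThan_concat)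
    also have "(\<Sum>i\<in>{0..<n1}. c i * f i p) = w1 p"
      by (simp add: 1 c_def f_def atLeast0LessThan)
    also have "(\<Sum>i\<in>{n1..<n1+n2}. c i * f i p) = w2 p"
      using sum.shift_bounds_nat_ivl[of "\<lambda>i. c i * f i p" 0 n1 n2]
      by (simp add: 2 c_def f_def atLeast0LessThan add.commute)
    finally show ?thesis .
  qed
  thus ?thesis unfolding lin_span_def using fX
    by (intro CollectI exI[of _ "n1+n2"] exI[of _ c] exI[of _ f]) (simp add: fun_eq_iff)
qed

lemma pt5_Mv: "pt5 (Mv M x)" by (simp add: pt5_def Mv_def)

lemma LSA:
  assumes "(a, b, c) \<in> Defs.conic k" "Vs a b c y1" "Vs a b c y2"
  shows "(\<lambda>p. d * plucker (Mv M y1) (Mv M y2) p) \<in> lin_span (Acurve M k)"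
proof (cases "\<exists>p. plucker (Mv M y1) (Mv M y2) p \<noteq> 0")
  case True
  have "plucker (Mv M y1) (Mv M y2) \<in> Zpt M (a, b, c)"
    unfolding Zpt_def using True Mv_Vz[OF assms(2)] Mv_Vz[OF assms(3)] by blast
  hence "plucker (Mv M y1) (Mv M y2) \<in> Acurve M k"
    unfolding Acurve_def using assms(1) by blast
  thus ?thesis by (rule LS1)
next
  case False
  hence "(\<lambda>p. d * plucker (Mv M y1) (Mv M y2) p) = (\<lambda>_. 0)" by auto
  thus ?thesis using LS0 by simp
qed

lemma Mv_lin3: "Mv M (\<lambda>i. a * x i + b * y i + c * z i) = (\<lambda>i. a * Mv M x i + b * Mv M y i + c * Mv M z i)"
  by (rule ext) (simp add: Mv_def sum.distrib sum_distrib_left algebra_simps)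
lemma Mv_add: "Mv M (\<lambda>i. x i + y i) = (\<lambda>i. Mv M x i + Mv M y i)"
  by (rule ext) (simp add: Mv_def sum.distrib algebra_simps)
lemma pl_lin3: "plucker (\<lambda>i. a * x i + b * y i + c * z i) w =
   (\<lambda>p. a * plucker x w p + b * plucker y w p + c * plucker z w p)"
  by (rule ext) (auto simp: plucker_def algebra_simps)
lemma pl_self: "plucker w w = (\<lambda>_. 0)"
  by (rule ext) (auto simp: plucker_def mult.commute)
lemma pl_add2: "plucker u (\<lambda>i. v i + w i) = (\<lambda>p. plucker u v p + plucker u w p)"
  by (rule ext) (auto simp: plucker_def algebra_simps)

lemma solve2:
  fixes r1 r2 A B :: complex
  assumes "r1 \<noteq> r2" "r1 \<noteq> 0" "r2 \<noteq> 0"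
  shows "\<exists>p1 p2. p1 * r1 + p2 * r2 = A \<and> p1 * r1^2 + p2 * r2^2 = B"
proof -
  have D: "r1 * r2^2 - r2 * r1^2 \<noteq> 0"
  proof -
    have "r1 * r2^2 - r2 * r1^2 = r1 * r2 * (r2 - r1)" by (simp add: algebra_simps power2_eq_square)
    thus ?thesis using assms by simp
  qed
  define D' where "D' = r1 * r2^2 - r2 * r1^2"
  define p1 where "p1 = (A * r2^2 - B * r2) / D'"
  define p2 where "p2 = (B * r1 - A * r1^2) / D'"
  have h1: "p1 * D' = A * r2^2 - B * r2" "p2 * D' = B * r1 - A * r1^2"
    using D by (simp_all add: p1_def p2_def D'_def)
  have "D' * (p1 * r1 + p2 * r2) = D' * A"
    using h1 unfolding D'_def by algebra
  hence "p1 * r1 + p2 * r2 = A" using D by (simp add: D'_def)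
  moreover have "D' * (p1 * r1^2 + p2 * r2^2) = D' * B"
    using h1 unfolding D'_def by algebra
  hence "p1 * r1^2 + p2 * r2^2 = B" using D by (simp add: D'_def)
  ultimately show ?thesis by blast
qed

lemma dec0:
  fixes k :: "nat \<Rightarrow> complex"
  assumes k1: "k 1 \<noteq> 0" and r: "r1 \<noteq> r2" "r1 \<noteq> 0" "r2 \<noteq> 0"
    "k 1 * r1^2 - k 5 * r1 + k 2 = 0" "k 1 * r2^2 - k 5 * r2 + k 2 = 0"
    and P: "pt5 P" "k 2 * P 1 - k 5 * P 2 + k 1 * P 3 = 0" "k 2 * P 2 - k 5 * P 3 + k 1 * P 4 = 0"
  shows "\<exists>c0 p1 p2. P = (\<lambda>i. c0 * ev 0 i + p1 * nu 1 r1 i + p2 * nu 1 r2 i)"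
proof -
  obtain p1 p2 where p: "p1 * r1 + p2 * r2 = P 1" "p1 * r1^2 + p2 * r2^2 = P 2"
    using solve2[OF r(1-3)] by blast
  have "k 1 * (p1 * r1^3 + p2 * r2^3) = k 5 * (p1 * r1^2 + p2 * r2^2) - k 2 * (p1 * r1 + p2 * r2)"
    using r(4,5) by algebra
  hence "k 1 * (p1 * r1^3 + p2 * r2^3) = k 1 * P 3" using p P(2) by algebra
  hence p3: "p1 * r1^3 + p2 * r2^3 = P 3" using k1 by simp
  have "k 1 * (p1 * r1^4 + p2 * r2^4) = k 5 * (p1 * r1^3 + p2 * r2^3) - k 2 * (p1 * r1^2 + p2 * r2^2)"
    using r(4,5) by algebra
  hence "k 1 * (p1 * r1^4 + p2 * r2^4) = k 1 * P 4" using p p3 P(3) by algebra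
  hence p4: "p1 * r1^4 + p2 * r2^4 = P 4" using k1 by simp
  have "P = (\<lambda>i. (P 0 - p1 - p2) * ev 0 i + p1 * nu 1 r1 i + p2 * nu 1 r2 i)"
  proof (rule ext)
    fix i :: nat
    consider "i = 0" | "i = 1" | "i = 2" | "i = 3" | "i = 4" | "i \<ge> 5" by linarith
    thus "P i = (P 0 - p1 - p2) * ev 0 i + p1 * nu 1 r1 i + p2 * nu 1 r2 i"
      by cases (use p p3 p4 P(1) in \<open>auto simp: ev_def nu_def pt5_def\<close>)
  qed
  thus ?thesis by blast
qed

lemma dec4:
  fixes k :: "nat \<Rightarrow> complex"
  assumes k1: "k 1 \<noteq> 0" and r: "r1 \<noteq> r2" "r1 \<noteq> 0" "r2 \<noteq> 0"
    "k 1 * r1^2 - k 3 * r1 + k 0 = 0" "k 1 * r2^2 - k 3 * r2 + k 0 = 0"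
    and P: "pt5 P" "k 1 * P 0 - k 3 * P 1 + k 0 * P 2 = 0" "k 1 * P 1 - k 3 * P 2 + k 0 * P 3 = 0"
  shows "\<exists>c0 p1 p2. P = (\<lambda>i. c0 * ev 4 i + p1 * nu r1 1 i + p2 * nu r2 1 i)"
proof -
  obtain p1 p2 where p: "p1 * r1 + p2 * r2 = P 3" "p1 * r1^2 + p2 * r2^2 = P 2"
    using solve2[OF r(1-3)] by blast
  have "k 1 * (p1 * r1^3 + p2 * r2^3) = k 3 * (p1 * r1^2 + p2 * r2^2) - k 0 * (p1 * r1 + p2 * r2)"
    using r(4,5) by algebra
  hence "k 1 * (p1 * r1^3 + p2 * r2^3) = k 1 * P 1" using p P(3) by algebra
  hence p3: "p1 * r1^3 + p2 * r2^3 = P 1" using k1 by simp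
  have "k 1 * (p1 * r1^4 + p2 * r2^4) = k 3 * (p1 * r1^3 + p2 * r2^3) - k 0 * (p1 * r1^2 + p2 * r2^2)"
    using r(4,5) by algebra
  hence "k 1 * (p1 * r1^4 + p2 * r2^4) = k 1 * P 0" using p p3 P(2) by algebra
  hence p4: "p1 * r1^4 + p2 * r2^4 = P 0" using k1 by simp
  have "P = (\<lambda>i. (P 4 - p1 - p2) * ev 4 i + p1 * nu r1 1 i + p2 * nu r2 1 i)"
  proof (rule ext)
    fix i :: nat
    consider "i = 0" | "i = 1" | "i = 2" | "i = 3" | "i = 4" | "i \<ge> 5" by linarith
    thus "P i = (P 4 - p1 - p2) * ev 4 i + p1 * nu r1 1 i + p2 * nu r2 1 i"
      by cases (use p p3 p4 P(1) in \<open>auto simp: ev_def nu_def pt5_def\<close>)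
  qed
  thus ?thesis by blast
qed

lemma Pk_props: "pt5 (Pk k)"
  "k 2 * Pk k 1 - k 5 * Pk k 2 + k 1 * Pk k 3 = 0"
  "k 2 * Pk k 2 - k 5 * Pk k 3 + k 1 * Pk k 4 = 0"
  "k 1 * Pk k 0 - k 3 * Pk k 1 + k 0 * Pk k 2 = 0"
  "k 1 * Pk k 1 - k 3 * Pk k 2 + k 0 * Pk k 3 = 0"
  by (simp_all add: Pk_def Let_def pt5_def) algebra+

lemma Vs_e0: "Vs 0 (- r) 1 (ev 0)" by (simp add: Vs_def pt5_def ev_def)
lemma Vs_nu0: "Vs 0 (- r) 1 (nu 1 r)" by (simp add: Vs_def pt5_def nu_def eval_nat_numeral)
lemma Vs_e4: "Vs 1 (- r) 0 (ev 4)" by (simp add: Vs_def pt5_def ev_def)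
lemma Vs_nu4: "Vs 1 (- r) 0 (nu r 1)" by (simp add: Vs_def pt5_def nu_def eval_nat_numeral)
lemma Vs_w1: "Vs w (- (1 + w)) 1 (nu 1 1)" by (simp add: Vs_def pt5_def nu_def)
lemma Vs_w2: "Vs w (- (1 + w)) 1 (nu 1 w)" by (simp add: Vs_def pt5_def nu_def eval_nat_numeral algebra_simps)

lemma conic0: "k 1 * r^2 - k 5 * r + k 2 = 0 \<Longrightarrow> (0, - r, 1) \<in> Defs.conic k"
  by (simp add: Defs.conic_def) algebra
lemma conic4: "k 1 * r^2 - k 3 * r + k 0 = 0 \<Longrightarrow> (1, - r, 0) \<in> Defs.conic k"
  by (simp add: Defs.conic_def) algebra

lemma memb:
  fixes k :: "nat \<Rightarrow> complex"
  assumes k1: "k 1 \<noteq> 0" and r: "r1 \<noteq> r2" "r1 \<noteq> 0" "r2 \<noteq> 0"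
    "k 1 * r1^2 - k 5 * r1 + k 2 = 0" "k 1 * r2^2 - k 5 * r2 + k 2 = 0"
    and q: "q1 \<noteq> q2" "q1 \<noteq> 0" "q2 \<noteq> 0"
    "k 1 * q1^2 - k 3 * q1 + k 0 = 0" "k 1 * q2^2 - k 3 * q2 + k 0 = 0"
  shows "plucker (Mv M (Pk k)) (Mv M Vv) \<in> lin_span (Acurve M k)"
proof -
  obtain c0 p1 p2 where P0: "Pk k = (\<lambda>i. c0 * ev 0 i + p1 * nu 1 r1 i + p2 * nu 1 r2 i)"
    using dec0[OF k1 r Pk_props(1-3)] by blast
  obtain d0 s1 s2 where P4: "Pk k = (\<lambda>i. d0 * ev 4 i + s1 * nu q1 1 i + s2 * nu q2 1 i)"
    using dec4[OF k1 q Pk_props(1,4,5)] by blast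
  have A: "plucker (Mv M (Pk k)) (Mv M (ev 0)) = (\<lambda>p. p1 * plucker (Mv M (nu 1 r1)) (Mv M (ev 0)) p
     + p2 * plucker (Mv M (nu 1 r2)) (Mv M (ev 0)) p)"
    by (subst P0, simp only: Mv_lin3 pl_lin3 pl_self) simp
  have B: "plucker (Mv M (Pk k)) (Mv M (ev 4)) = (\<lambda>p. s1 * plucker (Mv M (nu q1 1)) (Mv M (ev 4)) p
     + s2 * plucker (Mv M (nu q2 1)) (Mv M (ev 4)) p)"
    by (subst P4, simp only: Mv_lin3 pl_lin3 pl_self) simp
  have "plucker (Mv M (Pk k)) (Mv M Vv) = (\<lambda>p. plucker (Mv M (Pk k)) (Mv M (ev 0)) p
     + plucker (Mv M (Pk k)) (Mv M (ev 4)) p)"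
    unfolding Vv_def Mv_add pl_add2 ..
  also have "\<dots> \<in> lin_span (Acurve M k)"
    unfolding A B
    by (intro LSadd LSA[OF conic0[OF r(4)] Vs_nu0 Vs_e0] LSA[OF conic0[OF r(5)] Vs_nu0 Vs_e0]
       LSA[OF conic4[OF q(4)] Vs_nu4 Vs_e4] LSA[OF conic4[OF q(5)] Vs_nu4 Vs_e4])
  finally show ?thesis .
qed

lemma bil_ev_ev: "a < 5 \<Longrightarrow> b < 5 \<Longrightarrow> bil S (ev a) (ev b) = S a b"
proof -
  assume "a < 5" "b < 5"
  hence "a \<in> {0,1,2,3,4}" "b \<in> {0,1,2,3,4}" by auto
  thus ?thesis by (auto simp: bil_def ev_def sum5)
qed

theorem lemma6p1:
  fixes M :: "nat \<Rightarrow> nat \<Rightarrow> complex"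
  assumes "invertible5 M"
  shows "general_conic (\<lambda>k. \<forall>S. quadric S \<and> rnq M \<subseteq> Qset S \<and>
            Rprime M k = SecB M \<inter> Qset S \<longrightarrow>
            (\<exists>u v. pt5 u \<and> pt5 v \<and> (\<exists>p. plucker u v p \<noteq> 0) \<and>
                   plucker u v \<in> lin_span (Acurve M k) \<and> \<not> tangent_line S u v))"
proof -
  have main: "\<forall>k. Fk k \<noteq> 0 \<longrightarrow> (\<forall>S. quadric S \<and> rnq M \<subseteq> Qset S \<and>
            Rprime M k = SecB M \<inter> Qset S \<longrightarrow>
            (\<exists>u v. pt5 u \<and> pt5 v \<and> (\<exists>p. plucker u v p \<noteq> 0) \<and>
                   plucker u v \<in> lin_span (Acurve M k) \<and> \<not> tangent_line S u v))"
  proof (intro allI impI)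
    fix k S
    assume Fk: "Fk k \<noteq> 0" and hyp: "quadric S \<and> rnq M \<subseteq> Qset S \<and> Rprime M k = SecB M \<inter> Qset S"
    from Fk have nz: "k 0 \<noteq> 0" "k 1 \<noteq> 0" "k 2 \<noteq> 0" "k 5 ^ 2 - 4 * k 1 * k 2 \<noteq> 0"
      "k 3 ^ 2 - 4 * k 0 * k 1 \<noteq> 0" "k 0 + k 1 - k 3 \<noteq> 0" "k 1 + k 2 - k 5 \<noteq> 0"
      "k 0 + 4 * k 1 + k 2 - 2 * k 3 + k 4 - 2 * k 5 \<noteq> 0" "Gk k \<noteq> 0"
      unfolding Fk_def by auto
    from hyp have q: "quadric S" and rq: "rnq M \<subseteq> Qset S" and rp: "Rprime M k \<subseteq> Qset S" by auto
    define T where "T = Sp M S"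
    have symS: "\<forall>i<5. \<forall>j<5. S i j = S j i" using q by (simp add: quadric_def)
    have symT: "\<forall>i<5. \<forall>j<5. T i j = T j i" using Sp_sym[OF symS] by (simp add: T_def)
    have B: "\<forall>t. bil T (nu 1 t) (nu 1 t) = 0"
    proof
      fix t
      have "rnq_map M 1 t \<in> Qset S" using rq by (auto simp: rnq_def)
      thus "bil T (nu 1 t) (nu 1 t) = 0" by (simp add: Qset_def rnq_Mv bil_Mv T_def)
    qed
    have hV: "bil T y y = 0" if "(a, b, c) \<in> Defs.conic k" "Vs a b c y" for a b c y
    proof -
      have "Mv M y \<in> Rprime M k" using Mv_Vz[OF that(2)] that(1) by (auto simp: Rprime_def)
      hence "Mv M y \<in> Qset S" using rp by auto
      thus ?thesis by (simp add: Qset_def bil_Mv T_def)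
    qed
    have edge: "bil T y1 y2 = 0" if "(a, b, c) \<in> Defs.conic k" "Vs a b c y1" "Vs a b c y2" for a b c y1 y2
      using polar[OF symT, of a b c y1 y2] hV[OF that(1)] that(2,3) by blast
    obtain r1 r2 where r: "r1 \<noteq> r2" "k 1 * r1^2 + (- k 5) * r1 + k 2 = 0" "k 1 * r2^2 + (- k 5) * r2 + k 2 = 0"
      using quad_two_roots[of "k 1" "- k 5" "k 2"] nz(2,4) by auto
    have r': "k 1 * r1^2 - k 5 * r1 + k 2 = 0" "k 1 * r2^2 - k 5 * r2 + k 2 = 0" using r by simp_all
    have r0: "r1 \<noteq> 0" "r2 \<noteq> 0" using r' nz(3) by auto
    obtain q1 q2 where qq: "q1 \<noteq> q2" "k 1 * q1^2 + (- k 3) * q1 + k 0 = 0" "k 1 * q2^2 + (- k 3) * q2 + k 0 = 0"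
      using quad_two_roots[of "k 1" "- k 3" "k 0"] nz(2,5) by (auto simp: mult_ac)
    have q': "k 1 * q1^2 - k 3 * q1 + k 0 = 0" "k 1 * q2^2 - k 3 * q2 + k 0 = 0" using qq by simp_all
    have q0: "q1 \<noteq> 0" "q2 \<noteq> 0" using q' nz(1) by auto
    obtain w where w: "(k 0 + k 1 - k 3) * w^2 + (2 * k 1 - k 3 + k 4 - k 5) * w + (k 1 + k 2 - k 5) = 0"
      using quad_root nz(6) by blast
    have w0: "w \<noteq> 0" using w nz(7) by auto
    have w1: "w \<noteq> 1"
    proof
      assume "w = 1"
      hence "k 0 + 4 * k 1 + k 2 - 2 * k 3 + k 4 - 2 * k 5 = 0" using w by (simp add: algebra_simps)
      thus False using nz(8) by simp
    qed
    have wc: "k 0 * w^2 + k 1 * (-(1+w))^2 + k 2 + k 3 * w * (-(1+w)) + k 4 * w + k 5 * (-(1+w)) = 0"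
      using w by algebra
    have wconic: "(w, - (1 + w), 1) \<in> Defs.conic k"
    proof -
      have "k 0 * w^2 + k 1 * (- (1 + w))^2 + k 2 * 1^2 + k 3 * w * (- (1 + w)) + k 4 * w * 1
          + k 5 * (- (1 + w)) * 1 = 0" using wc by simp
      thus ?thesis by (simp add: Defs.conic_def)
    qed
    have Teq: "\<forall>i<5. \<forall>j<5. T i j = (T 0 4 / k 1) * Sk k i j"
      by (rule core[OF symT B nz(2) r(1) r0 r'(1) edge[OF conic0[OF r'(1)] Vs_e0 Vs_nu0]
            r'(2) edge[OF conic0[OF r'(2)] Vs_e0 Vs_nu0] qq(1) q0 q'(1)
            edge[OF conic4[OF q'(1)] Vs_e4 Vs_nu4] q'(2) edge[OF conic4[OF q'(2)] Vs_e4 Vs_nu4]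
            w0 w1 wc edge[OF wconic Vs_w1 Vs_w2]])
    define L where "L = T 0 4 / k 1"
    have TeqL: "T i j = L * Sk k i j" if "i < 5" "j < 5" for i j
      using Teq that unfolding L_def by blast
    have bilT: "bil T x y = L * bil (Sk k) x y" for x y
      unfolding bil_def sum_distrib_left
      by (intro sum.cong refl) (simp add: TeqL mult_ac)
    have L0: "L \<noteq> 0"
    proof
      assume "L = 0"
      hence bz: "bil T x y = 0" for x y using bilT by simp
      have "S a b = 0" if ab: "a < 5" "b < 5" for a b
      proof -
        obtain xa where xa: "\<forall>i<5. Mv M xa i = ev a i" using surjM[OF assms] by blast
        obtain xb where xb: "\<forall>i<5. Mv M xb i = ev b i" using surjM[OF assms] by blast
        have ea: "Mv M xa = ev a"
        proof
          fix i show "Mv M xa i = ev a i" using xa ab by (cases "i < 5") (auto simp: Mv_def ev_def)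
        qed
        have eb: "Mv M xb = ev b"
        proof
          fix i show "Mv M xb i = ev b i" using xb ab by (cases "i < 5") (auto simp: Mv_def ev_def)
        qed
        have "bil S (ev a) (ev b) = 0" using bz[of xa xb] by (simp add: T_def bil_Mv[symmetric] ea eb)
        thus ?thesis using bil_ev_ev[OF ab] by simp
      qed
      thus False using q by (auto simp: quadric_def)
    qed
    define u where "u = Mv M (Pk k)"
    define v where "v = Mv M Vv"
    have tan: "bil S u u * bil S v v - (bil S u v)^2 = L^2 * (2 * k 1 * Gk k)"
    proof -
      have "bil S u u = L * Gk k" by (simp add: u_def bil_Mv T_def[symmetric] bilT bil_Sk_PP)
      moreover have "bil S v v = L * (2 * k 1)" by (simp add: v_def bil_Mv T_def[symmetric] bilT bil_Sk_VV)
      moreover have "bil S u v = 0" by (simp add: u_def v_def bil_Mv T_def[symmetric] bilT bil_Sk_PV)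
      ultimately show ?thesis by (simp add: power2_eq_square mult_ac)
    qed
    have ntan: "\<not> tangent_line S u v"
      unfolding tangent_line_def tan using L0 nz(2,9) by simp
    have pl: "\<exists>p. plucker u v p \<noteq> 0"
    proof (rule ccontr)
      assume "\<not> (\<exists>p. plucker u v p \<noteq> 0)"
      hence "\<forall>p. plucker u v p = 0" by simp
      from plucker_zero_tan[OF this, of S] ntan show False by (simp add: tangent_line_def)
    qed
    have mem: "plucker u v \<in> lin_span (Acurve M k)"
      unfolding u_def v_def by (rule memb[OF nz(2) r(1) r0 r' qq(1) q0 q'])
    show "\<exists>u v. pt5 u \<and> pt5 v \<and> (\<exists>p. plucker u v p \<noteq> 0) \<and>
                   plucker u v \<in> lin_span (Acurve M k) \<and> \<not> tangent_line S u v"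
      using pt5_Mv pl mem ntan unfolding u_def v_def by blast
  qed
  show ?thesis unfolding general_conic_def using poly6_Fk Fk_nz main by blast
qed

end
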